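(* Let $n,m\ge 1$, let $\vec k=(k_1,\dots,k_m)$ be a vector of positive integer capacities with $k_1+\dots+k_m<n$, let $\vec x\in[0,1]^n$ and $\vec y\in[0,1]^m$. Then the First-Come-First-Served game associated with $\vec x$, $\vec y$ and $\vec k$ admits at least one pure Nash Equilibrium.
   Context: There are $n$ agents with positions $\vec x=(x_1,\dots,x_n)\in[0,1]^n$ and $m$ facilities with capacities $k_1,\dots,k_m$; $\vec y=(y_1,\dots,y_m)$ is a facility location, $y_j$ being the position of the facility of capacity $k_j$. A fixed total priority order on the agents is used to break ties. The First-Come-First-Served (FCFS) game induced by $(\vec x,\vec y)$: each agent $i$ chooses a pure strategy $s_i\in\{1,\dots,m\}$; for a profile $\vec s$, let $\mathcal S_j$ be the set of agents choosing $j$, and let $T_j\subseteq\mathcal S_j$ consist of the $\min(k_j,|\mathcal S_j|)$ agents of $\mathcal S_j$ with the smallest distances $|x_i-y_j|$ (ties broken by the priority order). The utility of agent $i$ is $u_i(\vec x,\vec y;\vec s)=1-|x_i-y_j|$ if $i\in T_j$ for some $j$, and $0$ otherwise. A pure Nash Equilibrium is a profile from which no agent can strictly increase its utility by unilaterally changing its strategy. *)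

theory Defs
  imports Complex_Main
begin

text \<open>Agents are 0..<n, facilities 0..<m.  x i = position of agent i,
 y j = position of facility j, k j = capacity of facility j.
 The priority order is given by an injective rank function prio on the agents:
 agent a has higher priority than agent b iff prio a < prio b.\<close>

definition beats :: "(nat \<Rightarrow> real) \<Rightarrow> (nat \<Rightarrow> real) \<Rightarrow> (nat \<Rightarrow> nat) \<Rightarrow> nat \<Rightarrow> nat \<Rightarrow> nat \<Rightarrow> bool" where
  "beats x y prio j a b \<longleftrightarrow>
     \<bar>x a - y j\<bar> < \<bar>x b - y j\<bar> \<or> (\<bar>x a - y j\<bar> = \<bar>x b - y j\<bar> \<and> prio a < prio b)"

definition served :: "nat \<Rightarrow> (nat \<Rightarrow> real) \<Rightarrow> (nat \<Rightarrow> real) \<Rightarrow> (nat \<Rightarrow> nat) \<Rightarrow> (nat \<Rightarrow> nat)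
     \<Rightarrow> (nat \<Rightarrow> nat) \<Rightarrow> nat \<Rightarrow> bool" where
  "served n x y k prio s i \<longleftrightarrow>
     card {a. a < n \<and> s a = s i \<and> beats x y prio (s i) a i} < k (s i)"

definition utility :: "nat \<Rightarrow> (nat \<Rightarrow> real) \<Rightarrow> (nat \<Rightarrow> real) \<Rightarrow> (nat \<Rightarrow> nat) \<Rightarrow> (nat \<Rightarrow> nat)
     \<Rightarrow> (nat \<Rightarrow> nat) \<Rightarrow> nat \<Rightarrow> real" where
  "utility n x y k prio s i =
     (if served n x y k prio s i then 1 - \<bar>x i - y (s i)\<bar> else 0)"

definition pure_NE :: "nat \<Rightarrow> nat \<Rightarrow> (nat \<Rightarrow> real) \<Rightarrow> (nat \<Rightarrow> real) \<Rightarrow> (nat \<Rightarrow> nat)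
     \<Rightarrow> (nat \<Rightarrow> nat) \<Rightarrow> (nat \<Rightarrow> nat) \<Rightarrow> bool" where
  "pure_NE n m x y k prio s \<longleftrightarrow>
     (\<forall>i<n. s i < m) \<and>
     (\<forall>i<n. \<forall>j<m. utility n x y k prio (s(i := j)) i \<le> utility n x y k prio s i)"

end

theory Submission
  imports Defs "HOL-Library.Product_Lexorder"
begin

definition G :: "nat set \<Rightarrow> (nat \<Rightarrow> nat) \<Rightarrow> nat \<Rightarrow> nat set" where
  "G A s j = {a\<in>A. s a = j}"

definition invar where
  "invar n m x y k prio A s \<longleftrightarrow>
    A \<subseteq> {..<n} \<and> (\<forall>a\<in>A. s a < m) \<and> (\<forall>j<m. card (G A s j) \<le> k j) \<and>
    (\<forall>a\<in>A. \<forall>u. u < n \<longrightarrow> u \<notin> A \<longrightarrow> beats x y prio (s a) a u) \<and>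
    (\<forall>a\<in>A. \<forall>j<m. \<bar>x a - y (s a)\<bar> \<le> \<bar>x a - y j\<bar> \<or>
       (card (G A s j) = k j \<and> (\<forall>b\<in>G A s j. beats x y prio j b a)))"

lemma beats_asym: "beats x y prio j a b \<Longrightarrow> \<not> beats x y prio j b a"
  unfolding beats_def by auto

lemma beats_irr: "\<not> beats x y prio j a a"
  unfolding beats_def by auto

lemma G_insert: "i \<notin> A \<Longrightarrow> G (insert i A) (s(i:=j)) j' =
   (if j' = j then insert i (G A s j') else G A s j')"
  unfolding G_def by auto

lemma card_A:
  assumes "finite A" "\<forall>a\<in>A. s a < m"
  shows "card A = (\<Sum>j<m. card (G A s j))"
proof -
  have "A = (\<Union>j\<in>{..<m}. G A s j)" using assms unfolding G_def by auto
  moreover have "card (\<Union>j\<in>{..<m}. G A s j) = (\<Sum>j<m. card (G A s j))"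
    by (rule card_UN_disjoint) (use assms in \<open>auto simp: G_def\<close>)
  ultimately show ?thesis by simp
qed

lemma step:
  assumes inv: "invar n m x y k prio A s"
    and j0: "j0 < m" "card (G A s j0) < k j0"
    and sumk: "(\<Sum>j<m. k j) < n"
    and inj: "inj_on prio {..<n}"
  shows "\<exists>i j. i < n \<and> i \<notin> A \<and> invar n m x y k prio (insert i A) (s(i:=j))"
proof -
  from inv have Asub: "A \<subseteq> {..<n}" and sm: "\<forall>a\<in>A. s a < m"
    and I1: "\<forall>j<m. card (G A s j) \<le> k j"
    and I2: "\<forall>a\<in>A. \<forall>u. u < n \<longrightarrow> u \<notin> A \<longrightarrow> beats x y prio (s a) a u"
    and I3: "\<forall>a\<in>A. \<forall>j<m. \<bar>x a - y (s a)\<bar> \<le> \<bar>x a - y j\<bar> \<or>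
       (card (G A s j) = k j \<and> (\<forall>b\<in>G A s j. beats x y prio j b a))"
    unfolding invar_def by auto
  have finA: "finite A" using Asub by (rule finite_subset) simp
  have "card A = (\<Sum>j<m. card (G A s j))" using card_A finA sm by blast
  also have "\<dots> \<le> (\<Sum>j<m. k j)" using I1 by (intro sum_mono) auto
  finally have "card A < n" using sumk by linarith
  hence "A \<noteq> {..<n}" by auto
  then obtain u where u: "u < n" "u \<notin> A" using Asub by auto
  define P where "P = {(i,j). i < n \<and> i \<notin> A \<and> j < m \<and> card (G A s j) < k j}"
  define key where "key = (\<lambda>(i,j). (\<bar>x i - y j\<bar>, prio i))"
  have finP: "finite P" unfolding P_def
    by (rule finite_subset[of _ "{..<n} \<times> {..<m}"]) auto
  have "(u, j0) \<in> P" using u j0 unfolding P_def by auto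
  hence neP: "key ` P \<noteq> {}" by auto
  have "Min (key ` P) \<in> key ` P" using finP neP by (intro Min_in) auto
  then obtain i j where ijP: "(i,j) \<in> P" and keq: "key (i,j) = Min (key ` P)" by auto
  have kmin: "\<And>q. q \<in> P \<Longrightarrow> key (i,j) \<le> key q" using keq finP by simp
  from ijP have i: "i < n" "i \<notin> A" "j < m" "card (G A s j) < k j" unfolding P_def by auto
  have bt: "beats x y prio j i u'" if "u' < n" "u' \<notin> A" "u' \<noteq> i" for u'
  proof -
    have "(u', j) \<in> P" using that i unfolding P_def by auto
    hence "key (i,j) \<le> key (u',j)" by (rule kmin)
    moreover have "prio i \<noteq> prio u'" using inj i that by (auto dest: inj_onD)
    ultimately show ?thesis unfolding key_def beats_def less_eq_prod_def by auto
  qed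
  define A' where "A' = insert i A"
  define s' where "s' = s(i:=j)"
  have Gs: "\<And>j'. G A' s' j' = (if j' = j then insert i (G A s j') else G A s j')"
    unfolding A'_def s'_def using G_insert i by blast
  have finG: "\<And>j'. finite (G A s j')" using finA unfolding G_def by auto
  have iG: "\<And>j'. i \<notin> G A s j'" using i unfolding G_def by auto
  have "invar n m x y k prio A' s'"
    unfolding invar_def
  proof (intro conjI)
    show "A' \<subseteq> {..<n}" using Asub i unfolding A'_def by auto
    show "\<forall>a\<in>A'. s' a < m" using sm i unfolding A'_def s'_def by auto
    show "\<forall>j'<m. card (G A' s' j') \<le> k j'"
      using I1 i finG iG by (auto simp: Gs)
    show "\<forall>a\<in>A'. \<forall>u. u < n \<longrightarrow> u \<notin> A' \<longrightarrow> beats x y prio (s' a) a u"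
      using I2 bt i unfolding A'_def s'_def by auto
    show "\<forall>a\<in>A'. \<forall>j'<m. \<bar>x a - y (s' a)\<bar> \<le> \<bar>x a - y j'\<bar> \<or>
       (card (G A' s' j') = k j' \<and> (\<forall>b\<in>G A' s' j'. beats x y prio j' b a))"
    proof (intro ballI allI impI)
      fix a j' assume a: "a \<in> A'" and j': "j' < m"
      show "\<bar>x a - y (s' a)\<bar> \<le> \<bar>x a - y j'\<bar> \<or>
       (card (G A' s' j') = k j' \<and> (\<forall>b\<in>G A' s' j'. beats x y prio j' b a))"
      proof (cases "a = i")
        case True
        show ?thesis
        proof (cases "card (G A s j') < k j'")
          case True
          hence "(i,j') \<in> P" using i j' unfolding P_def by auto
          hence "key (i,j) \<le> key (i,j')" by (rule kmin)
          thus ?thesis using \<open>a = i\<close> unfolding s'_def key_def less_eq_prod_def by auto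
        next
          case False
          hence full: "card (G A s j') = k j'" using I1 j' by (simp add: le_antisym not_less)
          hence "j' \<noteq> j" using i by auto
          hence "G A' s' j' = G A s j'" using Gs by simp
          moreover have "\<forall>b\<in>G A s j'. beats x y prio j' b a"
            using I2 i \<open>a = i\<close> unfolding G_def by auto
          ultimately show ?thesis using full by auto
        qed
      next
        case False
        hence aA: "a \<in> A" and sa: "s' a = s a" using a unfolding A'_def s'_def by auto
        from I3 aA j' consider "\<bar>x a - y (s a)\<bar> \<le> \<bar>x a - y j'\<bar>"
          | "card (G A s j') = k j'" "\<forall>b\<in>G A s j'. beats x y prio j' b a" by blast
        then show ?thesis
        proof cases
          case 1 thus ?thesis using sa by simp
        next
          case 2
          hence "j' \<noteq> j" using i by auto
          hence "G A' s' j' = G A s j'" using Gs by simp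
          thus ?thesis using 2 by auto
        qed
      qed
    qed
  qed
  thus ?thesis using i unfolding A'_def s'_def by blast
qed

lemma reach:
  assumes "invar n m x y k prio A s"
    and sumk: "(\<Sum>j<m. k j) < n"
    and inj: "inj_on prio {..<n}"
  shows "\<exists>A s. invar n m x y k prio A s \<and> (\<forall>j<m. card (G A s j) = k j)"
  using assms(1)
proof (induction "n - card A" arbitrary: A s rule: less_induct)
  case less
  show ?case
  proof (cases "\<forall>j<m. card (G A s j) = k j")
    case True thus ?thesis using less.prems by blast
  next
    case False
    then obtain j0 where j0: "j0 < m" "card (G A s j0) \<noteq> k j0" by blast
    hence "card (G A s j0) < k j0" using less.prems unfolding invar_def
      by (meson le_neq_implies_less)
    from step[OF less.prems j0(1) this sumk inj] obtain i j where
      ij: "i < n" "i \<notin> A" "invar n m x y k prio (insert i A) (s(i:=j))" by blast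
    have Asub: "A \<subseteq> {..<n}" using less.prems unfolding invar_def by auto
    hence finA: "finite A" by (rule finite_subset) simp
    have "card (insert i A) = Suc (card A)" using finA ij by simp
    moreover have "card (insert i A) \<le> n" using Asub ij
      by (metis card_lessThan card_mono finite_lessThan insert_subset lessThan_iff)
    ultimately have "n - card (insert i A) < n - card A" by linarith
    thus ?thesis using less.hyps ij(3) by blast
  qed
qed

theorem theorem1:
  fixes n m :: nat and x y :: "nat \<Rightarrow> real" and k prio :: "nat \<Rightarrow> nat"
  assumes "n \<ge> 1" and "m \<ge> 1"
    and "\<forall>j<m. k j > 0"
    and "(\<Sum>j<m. k j) < n"
    and "\<forall>i<n. x i \<in> {0..1}"
    and "\<forall>j<m. y j \<in> {0..1}"
    and "inj_on prio {..<n}"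
  shows "\<exists>s. pure_NE n m x y k prio s"
proof -
  have "invar n m x y k prio {} s" for s unfolding invar_def G_def by auto
  from reach[OF this assms(4) assms(7)] obtain A s where
    inv: "invar n m x y k prio A s" and full: "\<forall>j<m. card (G A s j) = k j" by blast
  from inv have Asub: "A \<subseteq> {..<n}" and sm: "\<forall>a\<in>A. s a < m"
    and I2: "\<forall>a\<in>A. \<forall>u. u < n \<longrightarrow> u \<notin> A \<longrightarrow> beats x y prio (s a) a u"
    and I3: "\<forall>a\<in>A. \<forall>j<m. \<bar>x a - y (s a)\<bar> \<le> \<bar>x a - y j\<bar> \<or>
       (card (G A s j) = k j \<and> (\<forall>b\<in>G A s j. beats x y prio j b a))"
    unfolding invar_def by auto
  define s0 where "s0 = (\<lambda>a. if a \<in> A then s a else 0)"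
  have s0m: "\<forall>i<n. s0 i < m" using sm assms(2) unfolding s0_def by auto
  have dist1: "\<bar>x i - y j\<bar> \<le> 1" if "i < n" "j < m" for i j
    using assms(5,6) that by fastforce
  have ut0: "utility n x y k prio t i \<ge> 0" if "i < n" "t i < m" for t i
    using dist1[OF that] unfolding utility_def by auto
  have notserved: "utility n x y k prio (s0(i:=j)) i = 0"
    if "i < n" "j < m" "i \<notin> G A s j" "\<forall>b\<in>G A s j. beats x y prio j b i" for i j
  proof -
    have "G A s j \<subseteq> {a. a < n \<and> (s0(i:=j)) a = (s0(i:=j)) i \<and> beats x y prio ((s0(i:=j)) i) a i}"
      using that Asub unfolding G_def s0_def by auto
    hence "card (G A s j) \<le> card {a. a < n \<and> (s0(i:=j)) a = (s0(i:=j)) i \<and> beats x y prio ((s0(i:=j)) i) a i}"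
      by (intro card_mono) auto
    hence "\<not> served n x y k prio (s0(i:=j)) i" using full that unfolding served_def by auto
    thus ?thesis unfolding utility_def by auto
  qed
  have "pure_NE n m x y k prio s0"
    unfolding pure_NE_def
  proof (intro conjI s0m allI impI)
    fix i j assume i: "i < n" and j: "j < m"
    show "utility n x y k prio (s0(i := j)) i \<le> utility n x y k prio s0 i"
    proof (cases "i \<in> A")
      case False
      have "\<forall>b\<in>G A s j. beats x y prio j b i" using I2 False i unfolding G_def by auto
      moreover have "i \<notin> G A s j" using False unfolding G_def by auto
      ultimately have "utility n x y k prio (s0(i := j)) i = 0" using notserved[OF i j] by blast
      moreover have "utility n x y k prio s0 i \<ge> 0" using ut0[OF i, of s0] s0m i by blast
      ultimately show ?thesis by linarith
    next
      case True
      show ?thesis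
      proof (cases "j = s i")
        case True
        have "s0(i := j) = s0" using True \<open>i \<in> A\<close> unfolding s0_def by auto
        thus ?thesis by simp
      next
        case False
        have "{a. a < n \<and> s0 a = s0 i \<and> beats x y prio (s0 i) a i} \<subseteq> G A s (s i) - {i}"
        proof
          fix a assume "a \<in> {a. a < n \<and> s0 a = s0 i \<and> beats x y prio (s0 i) a i}"
          hence a: "a < n" "s0 a = s i" "beats x y prio (s i) a i" using \<open>i \<in> A\<close> s0_def by auto
          have "a \<in> A"
          proof (rule ccontr)
            assume "a \<notin> A"
            hence "beats x y prio (s i) i a" using I2 \<open>i \<in> A\<close> a by auto
            thus False using a beats_asym by blast
          qed
          thus "a \<in> G A s (s i) - {i}" using a beats_irr unfolding G_def s0_def by auto
        qed
        moreover have "finite (G A s (s i))"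
        proof -
          have "G A s (s i) \<subseteq> {..<n}" using Asub unfolding G_def by auto
          thus ?thesis by (rule finite_subset) simp
        qed
        ultimately have "card {a. a < n \<and> s0 a = s0 i \<and> beats x y prio (s0 i) a i} \<le> card (G A s (s i) - {i})"
          by (intro card_mono) auto
        also have "\<dots> < card (G A s (s i))"
          by (rule card_Diff1_less[OF \<open>finite (G A s (s i))\<close>]) (use \<open>i \<in> A\<close> in \<open>simp add: G_def\<close>)
        also have "\<dots> = k (s i)" using full sm \<open>i \<in> A\<close> by blast
        finally have srv: "served n x y k prio s0 i"
          unfolding served_def using \<open>i \<in> A\<close> s0_def by auto
        hence u0: "utility n x y k prio s0 i = 1 - \<bar>x i - y (s i)\<bar>"
          unfolding utility_def using \<open>i \<in> A\<close> s0_def by auto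
        from I3 \<open>i \<in> A\<close> j consider "\<bar>x i - y (s i)\<bar> \<le> \<bar>x i - y j\<bar>"
          | "\<forall>b\<in>G A s j. beats x y prio j b i" by blast
        then show ?thesis
        proof cases
          case 1
          have "utility n x y k prio (s0(i := j)) i \<le> 1 - \<bar>x i - y j\<bar> \<or>
                utility n x y k prio (s0(i := j)) i = 0" unfolding utility_def by auto
          moreover have "0 \<le> 1 - \<bar>x i - y (s i)\<bar>" using dist1[OF i] sm \<open>i \<in> A\<close> by auto
          ultimately show ?thesis using 1 u0 by linarith
        next
          case 2
          have "i \<notin> G A s j" using False unfolding G_def by auto
          hence "utility n x y k prio (s0(i := j)) i = 0" using notserved[OF i j _ 2] by blast
          moreover have "utility n x y k prio s0 i \<ge> 0" using ut0[OF i, of s0] s0m i by blast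
          ultimately show ?thesis by linarith
        qed
      qed
    qed
  qed
  thus ?thesis by blast
qed

end
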